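(* Let $x_*$ be a feasible point of problem $(\mathcal{P})$, and let $\mathcal{D}(x_* )=\partial F(x_* )+\mathcal{N}(x_* )+N_A(x_* )$. Then: (1) a Lagrange multiplier of $(\mathcal{P})$ at $x_*$ exists if and only if $0\in\mathcal{D}(x_* )$; (2) the condition $$\max_{\omega\in W(x_* )}\langle\nabla_xf(x_*,\omega),h\rangle>0\quad\text{for all }h\in T_A(x_* )\setminus\{0\}\text{ with }DG(x_* )h\in T_K(G(x_* ))$$ holds if and only if $0\in\operatorname{int}\mathcal{D}(x_* )$.
   Context: Standing setting: $A\subseteq\mathbb{R}^d$ nonempty closed convex; $Y$ real Banach space with dual $Y^*$ and pairing $\langle\cdot,\cdot\rangle$ (also the inner product on $\mathbb{R}^d$); $K\subset Y$ nonempty closed convex cone; $W$ compact Hausdorff space; $f:\mathbb{R}^d\times W\to\mathbb{R}$ differentiable in $x$ for each $\omega$ with $f,\nabla_xf$ jointly continuous; $G:\mathbb{R}^d\to Y$ continuously Fréchet differentiable. $F(x)=\max_{\omega}f(x,\omega)$, $W(x)=\{\omega:f(x,\omega)=F(x)\}$; problem $(\mathcal{P})$: minimise $F(x)$ s.t. $G(x)\in K$, $x\in A$. Contingent cone $T_C(x)$: set of $h$ with $\alpha_n\downarrow0$, $h_n\to h$, $x+\alpha_nh_n\in C$. $K^*=\{y^*:\langle y^*,y\rangle\le0\ \forall y\in K\}$. $N_A(x)=\{z\in\mathbb{R}^d:\langle z,v\rangle\le0\ \forall v\in T_A(x)\}$. $\partial F(x)=\operatorname{co}\{\nabla_xf(x,\omega):\omega\in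 W(x)\}$. For linear $T:\mathbb{R}^d\to Y$, $[T]^*y^*\in\mathbb{R}^d$ is defined by $\langle[T]^*y^*,h\rangle=\langle y^*,Th\rangle$. $\mathcal{N}(x)=\{[DG(x)]^*\lambda:\lambda\in K^*,\ \langle\lambda,G(x)\rangle=0\}$. Lagrangian $L(x,\lambda)=F(x)+\langle\lambda,G(x)\rangle$; $\lambda_*$ is a Lagrange multiplier at feasible $x_*$ if $\lambda_*\in K^*$, $\langle\lambda_*,G(x_* )\rangle=0$ and $[L(\cdot,\lambda_* )]'(x_*,h)\ge0$ for all $h\in T_A(x_* )$. *)

theory Defs
  imports "HOL-Analysis.Analysis"
begin

definition contingent_cone :: "'v::real_normed_vector set \<Rightarrow> 'v \<Rightarrow> 'v set" where
  "contingent_cone C x = {h. \<exists>\<alpha> hs. (\<forall>n. \<alpha> n > 0) \<and> decseq \<alpha> \<and> \<alpha> \<longlonglongrightarrow> 0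
      \<and> hs \<longlonglongrightarrow> h \<and> (\<forall>n. x + \<alpha> n *\<^sub>R hs n \<in> C)}"

definition polar_cone :: "'b::real_normed_vector set \<Rightarrow> ('b \<Rightarrow>\<^sub>L real) set" where
  "polar_cone K = {y. \<forall>k\<in>K. blinfun_apply y k \<le> 0}"

definition normal_cone :: "'a::euclidean_space set \<Rightarrow> 'a \<Rightarrow> 'a set" where
  "normal_cone A x = {z. \<forall>v\<in>contingent_cone A x. z \<bullet> v \<le> 0}"

definition maxfun :: "('a \<Rightarrow> 'w \<Rightarrow> real) \<Rightarrow> 'a \<Rightarrow> real" where
  "maxfun f x = (SUP \<omega>. f x \<omega>)"

definition active_set :: "('a \<Rightarrow> 'w \<Rightarrow> real) \<Rightarrow> 'a \<Rightarrow> 'w set" where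
  "active_set f x = {\<omega>. f x \<omega> = maxfun f x}"

text \<open>Subdifferential co{grad_x f(x,\<omega>) : \<omega> \<in> W(x)}; gf is the gradient in x.\<close>
definition subdiff :: "('a \<Rightarrow> 'w \<Rightarrow> real) \<Rightarrow> ('a \<Rightarrow> 'w \<Rightarrow> 'a::euclidean_space) \<Rightarrow> 'a \<Rightarrow> 'a set" where
  "subdiff f gf x = convex hull {gf x \<omega> | \<omega>. \<omega> \<in> active_set f x}"

definition adj :: "('a::euclidean_space \<Rightarrow> 'b::real_normed_vector) \<Rightarrow> ('b \<Rightarrow>\<^sub>L real) \<Rightarrow> 'a" where
  "adj T y = (THE z. \<forall>h. z \<bullet> h = blinfun_apply y (T h))"

definition constr_cone :: "('a::euclidean_space \<Rightarrow> 'b::real_normed_vector) \<Rightarrow> ('a \<Rightarrow> 'a \<Rightarrow> 'b)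
    \<Rightarrow> 'b set \<Rightarrow> 'a \<Rightarrow> 'a set" where
  "constr_cone G DG K x = {adj (DG x) l | l. l \<in> polar_cone K \<and> blinfun_apply l (G x) = 0}"

definition Dset :: "('a \<Rightarrow> 'w \<Rightarrow> real) \<Rightarrow> ('a \<Rightarrow> 'w \<Rightarrow> 'a::euclidean_space)
    \<Rightarrow> ('a \<Rightarrow> 'b::real_normed_vector) \<Rightarrow> ('a \<Rightarrow> 'a \<Rightarrow> 'b) \<Rightarrow> 'b set \<Rightarrow> 'a set \<Rightarrow> 'a \<Rightarrow> 'a set" where
  "Dset f gf G DG K A x = {u + v + w | u v w. u \<in> subdiff f gf x \<and> v \<in> constr_cone G DG K x
      \<and> w \<in> normal_cone A x}"

definition has_dir_deriv :: "('a::real_normed_vector \<Rightarrow> real) \<Rightarrow> 'a \<Rightarrow> 'a \<Rightarrow> real \<Rightarrow> bool" where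
  "has_dir_deriv \<phi> x h d \<longleftrightarrow> ((\<lambda>t. (\<phi> (x + t *\<^sub>R h) - \<phi> x) / t) \<longlongrightarrow> d) (at_right 0)"

definition lagrangian :: "('a \<Rightarrow> 'w \<Rightarrow> real) \<Rightarrow> ('a \<Rightarrow> 'b::real_normed_vector) \<Rightarrow> ('b \<Rightarrow>\<^sub>L real) \<Rightarrow> 'a \<Rightarrow> real" where
  "lagrangian f G l x = maxfun f x + blinfun_apply l (G x)"

definition is_lagrange_multiplier :: "('a::euclidean_space \<Rightarrow> 'w \<Rightarrow> real) \<Rightarrow> ('a \<Rightarrow> 'b::real_normed_vector)
    \<Rightarrow> 'b set \<Rightarrow> 'a set \<Rightarrow> 'a \<Rightarrow> ('b \<Rightarrow>\<^sub>L real) \<Rightarrow> bool" where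
  "is_lagrange_multiplier f G K A x l \<longleftrightarrow> l \<in> polar_cone K \<and> blinfun_apply l (G x) = 0 \<and>
     (\<forall>h\<in>contingent_cone A x. \<exists>d. has_dir_deriv (lagrangian f G l) x h d \<and> d \<ge> 0)"

end

theory Submission
  imports Defs
begin


lemma hb_sublinear:
  fixes p :: "'b::real_normed_vector \<Rightarrow> real"
  assumes sub: "\<And>y z. p (y+z) \<le> p y + p z"
    and hom: "\<And>t y. t > 0 \<Longrightarrow> p (t *\<^sub>R y) = t * p y"
  shows "\<exists>l. linear l \<and> (\<forall>y. l y \<le> p y) \<and> l v = p v"
proof -
  have p0: "p 0 = 0" using hom[of 2 0] by simp
  have pneg: "- p (- y) \<le> p y" for y using sub[of y "-y"] p0 by simp
  define \<A> where "\<A> = {H :: ('b \<times> real) set. subspace H \<and> (\<forall>(y,a)\<in>H. a \<le> p y) \<and> (v, p v) \<in> H}"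
  have funM: "a = a'" if "H \<in> \<A>" "(y,a) \<in> H" "(y,a') \<in> H" for H y a a'
  proof -
    have sH: "subspace H" and dom: "\<forall>(y,a)\<in>H. a \<le> p y" using that(1) unfolding \<A>_def by auto
    have "(y,a) - (y,a') \<in> H" using subspace_diff[OF sH that(2,3)] .
    hence 1: "(0, a - a') \<in> H" by simp
    have "(-1::real) *\<^sub>R (0, a - a') \<in> H" using subspace_mul[OF sH 1] .
    hence 2: "(0, a' - a) \<in> H" by simp
    have "a - a' \<le> p 0" using dom 1 by fastforce
    moreover have "a' - a \<le> p 0" using dom 2 by fastforce
    ultimately show ?thesis using p0 by simp
  qed
  have ne: "\<A> \<noteq> {}"
  proof -
    define H0 where "H0 = range (\<lambda>t::real. t *\<^sub>R (v, p v))"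
    have "subspace H0" unfolding H0_def subspace_def
    proof (intro conjI ballI allI)
      show "0 \<in> range (\<lambda>t::real. t *\<^sub>R (v, p v))" by (rule range_eqI[where x=0]) (simp add: zero_prod_def)
      fix x y assume "x \<in> range (\<lambda>t::real. t *\<^sub>R (v, p v))" "y \<in> range (\<lambda>t::real. t *\<^sub>R (v, p v))"
      then obtain s t where "x = s *\<^sub>R (v, p v)" "y = t *\<^sub>R (v, p v)" by auto
      thus "x + y \<in> range (\<lambda>t::real. t *\<^sub>R (v, p v))"
        by (intro range_eqI[where x="s+t"]) (simp add: scaleR_add_left distrib_right)
    next
      fix c :: real and x assume "x \<in> range (\<lambda>t::real. t *\<^sub>R (v, p v))"
      then obtain s where "x = s *\<^sub>R (v, p v)" by auto
      thus "c *\<^sub>R x \<in> range (\<lambda>t::real. t *\<^sub>R (v, p v))"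
        by (intro range_eqI[where x="c * s"]) (simp add: zero_prod_def)
    qed
    moreover have "\<forall>(y,a)\<in>H0. a \<le> p y"
    proof (clarsimp simp: H0_def)
      fix t :: real
      show "t * p v \<le> p (t *\<^sub>R v)"
      proof (cases "t > 0")
        case True thus ?thesis using hom by simp
      next
        case False
        hence "t = 0 \<or> -t > 0" by auto
        thus ?thesis
        proof
          assume "t = 0" thus ?thesis using p0 by simp
        next
          assume t: "-t > 0"
          have "- p (- (t *\<^sub>R v)) \<le> p (t *\<^sub>R v)" by (rule pneg)
          moreover have "p (- (t *\<^sub>R v)) = - t * p v" using hom[OF t, of v] by simp
          ultimately show ?thesis by simp
        qed
      qed
    qed
    moreover have "(v, p v) \<in> H0" unfolding H0_def by (rule range_eqI[where x=1]) simp
    ultimately show ?thesis unfolding \<A>_def by blast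
  qed
  have ch: "\<Union>\<C> \<in> \<A>" if Cne: "\<C> \<noteq> {}" and Cch: "subset.chain \<A> \<C>" for \<C>
  proof -
    have CA: "\<C> \<subseteq> \<A>" and lin: "\<And>X Y. X \<in> \<C> \<Longrightarrow> Y \<in> \<C> \<Longrightarrow> X \<subseteq> Y \<or> Y \<subseteq> X"
      using that(2) unfolding subset.chain_def by auto
    have sub: "subspace X" if "X \<in> \<C>" for X using CA that unfolding \<A>_def by auto
    have "subspace (\<Union>\<C>)" unfolding subspace_def
    proof (intro conjI ballI allI)
      obtain X where "X \<in> \<C>" using Cne by auto
      thus "0 \<in> \<Union>\<C>" using sub subspace_0 by blast
    next
      fix x y assume "x \<in> \<Union>\<C>" "y \<in> \<Union>\<C>"
      then obtain X Y where XY: "X \<in> \<C>" "Y \<in> \<C>" "x \<in> X" "y \<in> Y" by auto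
      from lin[OF XY(1,2)] show "x + y \<in> \<Union>\<C>"
      proof
        assume "X \<subseteq> Y" thus ?thesis using XY sub[of Y] subspace_add by blast
      next
        assume "Y \<subseteq> X" thus ?thesis using XY sub[of X] subspace_add by blast
      qed
    next
      fix c :: real and x assume "x \<in> \<Union>\<C>"
      then obtain X where "X \<in> \<C>" "x \<in> X" by auto
      thus "c *\<^sub>R x \<in> \<Union>\<C>" using sub[of X] subspace_mul by blast
    qed
    moreover have "\<forall>(y,a)\<in>\<Union>\<C>. a \<le> p y" using CA unfolding \<A>_def by blast
    moreover have "(v, p v) \<in> \<Union>\<C>" using CA that(1) unfolding \<A>_def by blast
    ultimately show ?thesis unfolding \<A>_def by blast
  qed
  obtain M where MA: "M \<in> \<A>" and Mmax: "\<And>X. X \<in> \<A> \<Longrightarrow> M \<subseteq> X \<Longrightarrow> X = M"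
    using subset_Zorn_nonempty[OF ne ch] by blast
  have sM: "subspace M" and domM: "\<And>y a. (y,a) \<in> M \<Longrightarrow> a \<le> p y" and vM: "(v, p v) \<in> M"
    using MA unfolding \<A>_def by auto
  have full: "y0 \<in> fst ` M" for y0
  proof (rule ccontr)
    assume y0: "y0 \<notin> fst ` M"
    define S where "S = {a - p (s - y0) | s a. (s,a) \<in> M}"
    have bnd: "b \<le> p (s2 + y0) - a2" if bS: "b \<in> S" and s2M: "(s2,a2) \<in> M" for b s2 a2
    proof -
      obtain s a where sa: "(s,a) \<in> M" "b = a - p (s - y0)" using bS unfolding S_def by auto
      have "(s + s2, a + a2) \<in> M" using subspace_add[OF sM sa(1) s2M] by simp
      hence "a + a2 \<le> p (s + s2)" by (rule domM)
      also have "\<dots> \<le> p (s - y0) + p (s2 + y0)" using sub[of "s - y0" "s2 + y0"] by simp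
      finally show ?thesis using sa by simp
    qed
    have Sne: "S \<noteq> {}" using vM unfolding S_def by blast
    define c where "c = Sup S"
    have bddS: "bdd_above S" unfolding bdd_above_def using bnd[OF _ vM] by blast
    have c1: "a - p (s - y0) \<le> c" if "(s,a) \<in> M" for s a
      unfolding c_def
      by (rule cSup_upper[OF _ bddS]) (use that in \<open>auto simp: S_def\<close>)
    have c2: "c \<le> p (s + y0) - a" if "(s,a) \<in> M" for s a
      unfolding c_def by (rule cSup_least[OF Sne]) (use bnd that in auto)
    define M' where "M' = {(s + t *\<^sub>R y0, a + t * c) | s a t. (s,a) \<in> M}"
    have inM': "(s + t *\<^sub>R y0, a + t * c) \<in> M'" if "(s,a) \<in> M" for s a t
      unfolding M'_def using that by blast
    have "subspace M'" unfolding subspace_def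
    proof (intro conjI ballI allI)
      show "0 \<in> M'" using inM'[of 0 0 0] subspace_0[OF sM] by (simp add: zero_prod_def)
    next
      fix x y assume "x \<in> M'" "y \<in> M'"
      then obtain s a t s' a' t' where "(s,a) \<in> M" "(s',a') \<in> M"
        "x = (s + t *\<^sub>R y0, a + t * c)" "y = (s' + t' *\<^sub>R y0, a' + t' * c)"
        unfolding M'_def by blast
      moreover have "(s + s', a + a') \<in> M" using subspace_add[OF sM \<open>(s,a) \<in> M\<close> \<open>(s',a') \<in> M\<close>] by simp
      ultimately show "x + y \<in> M'" using inM'[of "s+s'" "a+a'" "t+t'"]
        by (simp add: algebra_simps)
    next
      fix r :: real and x assume "x \<in> M'"
      then obtain s a t where "(s,a) \<in> M" "x = (s + t *\<^sub>R y0, a + t * c)"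
        unfolding M'_def by blast
      moreover have "(r *\<^sub>R s, r * a) \<in> M" using subspace_mul[OF sM \<open>(s,a) \<in> M\<close>, of r] by simp
      ultimately show "r *\<^sub>R x \<in> M'" using inM'[of "r *\<^sub>R s" "r * a" "r * t"]
        by (simp add: algebra_simps)
    qed
    moreover have "\<forall>(y,b)\<in>M'. b \<le> p y"
    proof (clarsimp simp: M'_def)
      fix s a t assume sa: "(s,a) \<in> M"
      show "a + t * c \<le> p (s + t *\<^sub>R y0)"
      proof (cases "t > 0")
        case True
        have "((1/t) *\<^sub>R s, (1/t) * a) \<in> M" using subspace_mul[OF sM sa, of "1/t"] by simp
        from c2[OF this] have "c \<le> p ((1/t) *\<^sub>R s + y0) - a / t" by simp
        also have "p ((1/t) *\<^sub>R s + y0) = p ((1/t) *\<^sub>R (s + t *\<^sub>R y0))"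
          using True by (simp add: scaleR_add_right)
        also have "\<dots> = (1/t) * p (s + t *\<^sub>R y0)" using hom True by simp
        finally have cc: "c \<le> (1/t) * p (s + t *\<^sub>R y0) - a / t" .
        have "t * c \<le> t * ((1/t) * p (s + t *\<^sub>R y0) - a / t)"
          using mult_left_mono[OF cc, of t] True by simp
        also have "\<dots> = p (s + t *\<^sub>R y0) - a" using True by (simp add: right_diff_distrib)
        finally show ?thesis by (simp add: mult.commute)
      next
        case False
        show ?thesis
        proof (cases "t = 0")
          case True thus ?thesis using domM[OF sa] by simp
        next
          case False
          with \<open>\<not> t > 0\<close> have r: "-t > 0" by simp
          define r where "r = -t"
          have rp: "r > 0" using r r_def by simp
          have "((1/r) *\<^sub>R s, (1/r) * a) \<in> M" using subspace_mul[OF sM sa, of "1/r"] by simp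
          from c1[OF this] have "a / r - p ((1/r) *\<^sub>R s - y0) \<le> c" by simp
          also have "p ((1/r) *\<^sub>R s - y0) = p ((1/r) *\<^sub>R (s + t *\<^sub>R y0))"
            using rp by (simp add: r_def scaleR_add_right)
          also have "\<dots> = (1/r) * p (s + t *\<^sub>R y0)" using hom rp by simp
          finally have cc: "a / r - (1/r) * p (s + t *\<^sub>R y0) \<le> c" .
          have "r * (a / r - (1/r) * p (s + t *\<^sub>R y0)) \<le> r * c"
            using mult_left_mono[OF cc, of r] rp by simp
          moreover have "r * (a / r - (1/r) * p (s + t *\<^sub>R y0)) = a - p (s + t *\<^sub>R y0)"
            using rp by (simp add: right_diff_distrib)
          ultimately show ?thesis by (simp add: r_def mult.commute)
        qed
      qed
    qed
    moreover have "(v, p v) \<in> M'" using vM inM'[of v "p v" 0] by simp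
    ultimately have "M' \<in> \<A>" unfolding \<A>_def by blast
    moreover have "M \<subseteq> M'" using inM'[where t=0] by auto
    ultimately have "M' = M" using Mmax by blast
    moreover have "(y0, c) \<in> M'" using subspace_0[OF sM] inM'[of 0 0 1]
      by (simp add: zero_prod_def)
    ultimately show False using y0 by force
  qed
  define l where "l y = (THE a. (y,a) \<in> M)" for y
  have lM: "(y, l y) \<in> M" for y
  proof -
    obtain a where "(y,a) \<in> M" using full[of y] by force
    moreover have "(y,a') \<in> M \<Longrightarrow> a' = a" for a' using funM[OF MA] calculation by blast
    ultimately show ?thesis unfolding l_def by (metis theI)
  qed
  have leq: "(y,a) \<in> M \<Longrightarrow> l y = a" for y a using funM[OF MA lM] by blast
  have "linear l"
  proof (rule linearI)
    fix x y show "l (x + y) = l x + l y"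
      using leq subspace_add[OF sM lM[of x] lM[of y]] by simp
  next
    fix r :: real and x show "l (r *\<^sub>R x) = r *\<^sub>R l x"
      using leq subspace_mul[OF sM lM[of x], of r] by simp
  qed
  moreover have "\<forall>y. l y \<le> p y" using domM lM by blast
  moreover have "l v = p v" using leq vM by blast
  ultimately show ?thesis by blast
qed

lemma infdist_ge_aux:
  assumes "C \<noteq> {}" "\<And>c. c \<in> C \<Longrightarrow> a \<le> dist x c"
  shows "a \<le> infdist x C"
  unfolding infdist_notempty[OF assms(1)] by (rule cINF_greatest[OF assms(1) assms(2)])

lemma hb_cone_sep:
  fixes C :: "'b::real_normed_vector set"
  assumes cvx: "convex C" and cn: "cone C" and cl: "closed C" and z: "0 \<in> C" and v: "v \<notin> C"
  shows "\<exists>l::'b \<Rightarrow>\<^sub>L real. (\<forall>c\<in>C. blinfun_apply l c \<le> 0) \<and> blinfun_apply l v > 0"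
proof -
  have Cne: "C \<noteq> {}" using z by auto
  define p where "p y = infdist y C" for y
  have addC: "c1 + c2 \<in> C" if "c1 \<in> C" "c2 \<in> C" for c1 c2
  proof -
    have "(1/2) *\<^sub>R c1 + (1/2) *\<^sub>R c2 \<in> C" using cvx that unfolding convex_def by auto
    hence "2 *\<^sub>R ((1/2) *\<^sub>R c1 + (1/2) *\<^sub>R c2) \<in> C" using cn unfolding cone_def by auto
    thus ?thesis by (simp add: scaleR_add_right)
  qed
  have sub: "p (y + w) \<le> p y + p w" for y w
  proof -
    have "p (y + w) - dist w c2 \<le> dist y c1" if "c1 \<in> C" "c2 \<in> C" for c1 c2
    proof -
      have "p (y + w) \<le> dist (y + w) (c1 + c2)" unfolding p_def by (rule infdist_le[OF addC[OF that]])
      also have "\<dots> \<le> dist y c1 + dist w c2"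
        by (simp add: dist_norm) (metis add_diff_add norm_triangle_ineq)
      finally show ?thesis by simp
    qed
    hence "p (y + w) - dist w c2 \<le> p y" if "c2 \<in> C" for c2
      unfolding p_def[of y] using that by (intro infdist_ge_aux[OF Cne]) auto
    hence "p (y + w) - p y \<le> dist w c" if "c \<in> C" for c using that by force
    hence "p (y + w) - p y \<le> p w" unfolding p_def[of w] by (intro infdist_ge_aux[OF Cne]) auto
    thus ?thesis by simp
  qed
  have hom: "p (t *\<^sub>R y) = t * p y" if t: "t > 0" for t y
  proof (rule antisym)
    have "p (t *\<^sub>R y) / t \<le> dist y c" if "c \<in> C" for c
    proof -
      have "t *\<^sub>R c \<in> C" using cn that t unfolding cone_def by auto
      hence "p (t *\<^sub>R y) \<le> dist (t *\<^sub>R y) (t *\<^sub>R c)" unfolding p_def by (rule infdist_le)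
      also have "\<dots> = t * dist y c" using t
        by (simp add: dist_norm scaleR_diff_right[symmetric])
      finally show ?thesis using t by (simp add: field_simps)
    qed
    hence "p (t *\<^sub>R y) / t \<le> p y" unfolding p_def[of y] by (intro infdist_ge_aux[OF Cne]) auto
    thus "p (t *\<^sub>R y) \<le> t * p y" using t by (simp add: field_simps)
  next
    have "t * p y \<le> dist (t *\<^sub>R y) c" if "c \<in> C" for c
    proof -
      have "(1/t) *\<^sub>R c \<in> C" using cn that t unfolding cone_def by auto
      hence "p y \<le> dist y ((1/t) *\<^sub>R c)" unfolding p_def by (rule infdist_le)
      also have "dist y ((1/t) *\<^sub>R c) = dist (t *\<^sub>R y) c / t"
      proof -
        have "t *\<^sub>R y - c = t *\<^sub>R (y - (1/t) *\<^sub>R c)" using t by (simp add: scaleR_diff_right)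
        hence "dist (t *\<^sub>R y) c = t * dist y ((1/t) *\<^sub>R c)" using t by (simp add: dist_norm)
        thus ?thesis using t by simp
      qed
      finally show ?thesis using t by (simp add: field_simps)
    qed
    thus "t * p y \<le> p (t *\<^sub>R y)" unfolding p_def[of "t *\<^sub>R y"] by (intro infdist_ge_aux[OF Cne]) auto
  qed
  obtain l where lin: "linear l" and le: "\<And>y. l y \<le> p y" and lv: "l v = p v"
    using hb_sublinear[of p v, OF sub hom] by blast
  have pn: "p y \<le> norm y" for y unfolding p_def using infdist_le[OF z, of y] by simp
  have bl: "bounded_linear l"
  proof (rule bounded_linear_intro[where K=1])
    show "l (x + y) = l x + l y" for x y using lin by (simp add: linear_add)
    show "l (r *\<^sub>R x) = r *\<^sub>R l x" for r x using lin by (simp add: linear_scale)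
    show "norm (l x) \<le> norm x * 1" for x
    proof -
      have "l x \<le> norm x" using le[of x] pn[of x] by simp
      moreover have "- l x \<le> norm x" using le[of "-x"] pn[of "-x"] lin by (simp add: linear_neg)
      ultimately show ?thesis by simp
    qed
  qed
  have "\<forall>c\<in>C. l c \<le> 0" using le unfolding p_def by (metis infdist_zero)
  moreover have "l v > 0" using lv infdist_pos_not_in_closed[OF cl Cne v] Cne unfolding p_def by simp
  ultimately show ?thesis using bounded_linear_Blinfun_apply[OF bl] by (intro exI[of _ "Blinfun l"]) simp
qed




lemma cc_mem: "h \<in> cone hull ((\<lambda>a. a - x) ` A) \<longleftrightarrow> (\<exists>t a. t \<ge> 0 \<and> a \<in> A \<and> h = t *\<^sub>R (a - x))"
  unfolding cone_hull_expl by blast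

lemma contingent_sub_closure:
  fixes A :: "'v::real_normed_vector set"
  assumes "h \<in> contingent_cone A x"
  shows "h \<in> closure (cone hull ((\<lambda>a. a - x) ` A))"
proof -
  obtain \<alpha> hs where pos: "\<And>n. \<alpha> n > 0" and hs: "hs \<longlonglongrightarrow> h" and inA: "\<And>n. x + \<alpha> n *\<^sub>R hs n \<in> A"
    using assms unfolding contingent_cone_def by blast
  have "hs n \<in> cone hull ((\<lambda>a. a - x) ` A)" for n
    unfolding cc_mem
    by (rule exI[of _ "1 / \<alpha> n"], rule exI[of _ "x + \<alpha> n *\<^sub>R hs n"]) (use pos[of n] inA[of n] in auto)
  thus ?thesis unfolding closure_sequential using hs by blast
qed

lemma closure_sub_contingent:
  fixes A :: "'v::real_normed_vector set"
  assumes cvx: "convex A" and xA: "x \<in> A" and h: "h \<in> closure (cone hull ((\<lambda>a. a - x) ` A))"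
  shows "h \<in> contingent_cone A x"
proof -
  obtain hk where hk: "\<And>n. hk n \<in> cone hull ((\<lambda>a. a - x) ` A)" and lim: "hk \<longlonglongrightarrow> h"
    using h unfolding closure_sequential by blast
  obtain t a where t: "\<And>n. t n \<ge> 0" and a: "\<And>n. a n \<in> A" and hka: "\<And>n. hk n = t n *\<^sub>R (a n - x)"
    using hk unfolding cc_mem by metis
  define T where "T n = 1 + (\<Sum>k\<le>n. t k)" for n
  have T1: "T n \<ge> 1" for n unfolding T_def using t by (simp add: sum_nonneg)
  have Tt: "t n \<le> T n" for n unfolding T_def using t
    by (smt (verit) atMost_iff finite_atMost order_refl sum_nonneg_leq_bound)
  have Tmono: "T m \<le> T n" if "m \<le> n" for m n
    unfolding T_def using t that by (simp add: sum_mono2)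
  define \<alpha> where "\<alpha> n = 1 / ((real n + 1) * T n)" for n
  have pos: "\<alpha> n > 0" for n unfolding \<alpha>_def using T1[of n] by simp
  have dec: "decseq \<alpha>" unfolding decseq_def \<alpha>_def
  proof (intro allI impI)
    fix m n :: nat assume "m \<le> n"
    hence "(real m + 1) * T m \<le> (real n + 1) * T n"
      using Tmono[OF \<open>m \<le> n\<close>] T1[of m] by (intro mult_mono) auto
    thus "1 / ((real n + 1) * T n) \<le> 1 / ((real m + 1) * T m)"
      using T1[of m] T1[of n] by (intro divide_left_mono) (auto intro!: mult_pos_pos)
  qed
  have le: "\<alpha> n \<le> 1 / (real n + 1)" for n unfolding \<alpha>_def using T1[of n]
    by (intro divide_left_mono) auto
  have "(\<lambda>n. 1 / (real n + 1)) \<longlonglongrightarrow> 0" using LIMSEQ_inverse_real_of_nat by (simp add: inverse_eq_divide add.commute)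
  hence a0: "\<alpha> \<longlonglongrightarrow> 0"
    by (rule real_tendsto_sandwich[rotated 2, OF tendsto_const]) (use pos le in \<open>auto simp: less_imp_le\<close>)
  have inA: "x + \<alpha> n *\<^sub>R hk n \<in> A" for n
  proof -
    define s where "s = \<alpha> n * t n"
    have s0: "s \<ge> 0" unfolding s_def using pos[of n] t[of n] by simp
    have s1: "s \<le> 1"
    proof -
      have "s = t n / ((real n + 1) * T n)" unfolding s_def \<alpha>_def by simp
      also have "\<dots> \<le> T n / (1 * T n)" using T1[of n] Tt[of n] t[of n]
        by (intro frac_le mult_mono) auto
      also have "\<dots> = 1" using T1[of n] by simp
      finally show ?thesis .
    qed
    have "x + \<alpha> n *\<^sub>R hk n = (1 - s) *\<^sub>R x + s *\<^sub>R a n"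
      unfolding hka s_def by (simp add: algebra_simps)
    also have "\<dots> \<in> A" using cvx xA a[of n] s0 s1 unfolding convex_def by auto
    finally show ?thesis .
  qed
  show ?thesis unfolding contingent_cone_def using pos dec a0 lim inA by blast
qed




lemma tube:
  fixes g :: "'a::metric_space \<Rightarrow> 'w::topological_space \<Rightarrow> 'c::metric_space"
  assumes W: "compact (UNIV::'w set)" and gc: "continuous_on UNIV (\<lambda>p. g (fst p) (snd p))"
    and e: "e > 0"
  shows "\<exists>d>0. \<forall>y \<omega>. dist y x < d \<longrightarrow> dist (g y \<omega>) (g x \<omega>) < e"
proof -
  have loc: "\<exists>B d. open B \<and> \<omega> \<in> B \<and> d > 0 \<and> (\<forall>y \<omega>'. dist y x < d \<and> \<omega>' \<in> B \<longrightarrow> dist (g y \<omega>') (g x \<omega>) < e/2)" for \<omega>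
  proof -
    define U where "U = (\<lambda>p. g (fst p) (snd p)) -` ball (g x \<omega>) (e/2)"
    have "open U" unfolding U_def using gc continuous_on_open_vimage[of UNIV] by auto
    moreover have "(x, \<omega>) \<in> U" unfolding U_def using e by simp
    ultimately obtain A B where AB: "open A" "open B" "(x,\<omega>) \<in> A \<times> B" "A \<times> B \<subseteq> U"
      by (rule open_prod_elim)
    then obtain d where d: "d > 0" "ball x d \<subseteq> A" using open_contains_ball by blast
    have "dist (g y \<omega>') (g x \<omega>) < e/2" if "dist y x < d" "\<omega>' \<in> B" for y \<omega>'
    proof -
      have "(y, \<omega>') \<in> U" using AB(4) d(2) that by (auto simp: dist_commute)
      thus ?thesis unfolding U_def by (simp add: dist_commute)
    qed
    thus ?thesis using AB d by blast
  qed
  hence "\<forall>\<omega>. \<exists>B. \<exists>d. open B \<and> \<omega> \<in> B \<and> d > 0 \<and> (\<forall>y \<omega>'. dist y x < d \<and> \<omega>' \<in> B \<longrightarrow> dist (g y \<omega>') (g x \<omega>) < e/2)" by blast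
  then obtain B where "\<forall>\<omega>. \<exists>d. open (B \<omega>) \<and> \<omega> \<in> B \<omega> \<and> d > 0 \<and> (\<forall>y \<omega>'. dist y x < d \<and> \<omega>' \<in> B \<omega> \<longrightarrow> dist (g y \<omega>') (g x \<omega>) < e/2)"
    by (rule choice[THEN exE])
  then obtain d where dd: "\<forall>\<omega>. open (B \<omega>) \<and> \<omega> \<in> B \<omega> \<and> d \<omega> > 0 \<and> (\<forall>y \<omega>'. dist y x < d \<omega> \<and> \<omega>' \<in> B \<omega> \<longrightarrow> dist (g y \<omega>') (g x \<omega>) < e/2)"
    by (rule choice[THEN exE])
  have Bd: "\<And>\<omega>. open (B \<omega>)" "\<And>\<omega>. \<omega> \<in> B \<omega>" "\<And>\<omega>. d \<omega> > 0"
    "\<And>\<omega> y \<omega>'. dist y x < d \<omega> \<Longrightarrow> \<omega>' \<in> B \<omega> \<Longrightarrow> dist (g y \<omega>') (g x \<omega>) < e/2"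
    using dd by blast+
  have cov: "UNIV \<subseteq> (\<Union>c\<in>UNIV. B c)" using Bd(2) by blast
  obtain C where C0: "C \<subseteq> UNIV" and C: "finite C" "UNIV \<subseteq> (\<Union>c\<in>C. B c)"
    by (rule compactE_image[OF W Bd(1) cov])
  have Cne: "C \<noteq> {}" using C(2) by auto
  define d0 where "d0 = Min (d ` C)"
  have d0: "d0 > 0" unfolding d0_def using C(1) Cne Bd(3) by auto
  have "dist (g y \<omega>) (g x \<omega>) < e" if "dist y x < d0" for y \<omega>
  proof -
    obtain c where c: "c \<in> C" "\<omega> \<in> B c" using C(2) by auto
    have "d0 \<le> d c" unfolding d0_def using C(1) c(1) by auto
    hence "dist (g y \<omega>) (g x c) < e/2" using Bd(4)[of y c \<omega>] that c by auto
    moreover have "dist (g x \<omega>) (g x c) < e/2" using Bd(4)[of x c \<omega>] c Bd(3) by auto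
    ultimately show ?thesis by (rule dist_triangle_half_l)
  qed
  thus ?thesis using d0 by blast
qed

locale dsk =
  fixes f :: "'a::euclidean_space \<Rightarrow> 'w::t2_space \<Rightarrow> real" and gf :: "'a \<Rightarrow> 'w \<Rightarrow> 'a"
  assumes W: "compact (UNIV::'w set)"
    and f_diff: "\<And>x \<omega>. ((\<lambda>y. f y \<omega>) has_derivative (\<lambda>h. gf x \<omega> \<bullet> h)) (at x)"
    and f_cont: "continuous_on UNIV (\<lambda>p. f (fst p) (snd p))"
    and gf_cont: "continuous_on UNIV (\<lambda>p. gf (fst p) (snd p))"
begin

lemma fw_cont: "continuous_on UNIV (\<lambda>\<omega>. f y \<omega>)"
  using continuous_on_compose2[OF f_cont, of UNIV "\<lambda>\<omega>. (y, \<omega>)"] by (simp add: continuous_on_Pair)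

lemma gfw_cont: "continuous_on UNIV (\<lambda>\<omega>. gf y \<omega>)"
  using continuous_on_compose2[OF gf_cont, of UNIV "\<lambda>\<omega>. (y, \<omega>)"] by (simp add: continuous_on_Pair)

lemma max_att: "\<exists>\<omega>. maxfun f y = f y \<omega> \<and> (\<forall>\<omega>'. f y \<omega>' \<le> f y \<omega>)"
proof -
  obtain \<omega> where \<omega>: "\<forall>\<omega>'. f y \<omega>' \<le> f y \<omega>"
    using continuous_attains_sup[OF W _ fw_cont[of y]] by auto
  have "maxfun f y = f y \<omega>" unfolding maxfun_def
    by (rule cSup_eq_maximum) (use \<omega> in auto)
  thus ?thesis using \<omega> by blast
qed

lemma le_max: "f y \<omega> \<le> maxfun f y"
  using max_att[of y] by auto

lemma active_ne: "active_set f y \<noteq> {}"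
  using max_att[of y] unfolding active_set_def by auto

lemma active_compact: "compact (active_set f y)"
proof -
  have "closed {\<omega>. f y \<omega> = maxfun f y}"
    using continuous_closed_preimage_constant[OF fw_cont[of y] closed_UNIV] by simp
  hence "compact (UNIV \<inter> {\<omega>. f y \<omega> = maxfun f y})" using W by blast
  thus ?thesis unfolding active_set_def by simp
qed

lemma M_att: "\<exists>\<omega>\<in>active_set f x. (SUP \<omega>\<in>active_set f x. gf x \<omega> \<bullet> h) = gf x \<omega> \<bullet> h
   \<and> (\<forall>\<omega>'\<in>active_set f x. gf x \<omega>' \<bullet> h \<le> gf x \<omega> \<bullet> h)"
proof -
  have c: "continuous_on (active_set f x) (\<lambda>\<omega>. gf x \<omega> \<bullet> h)"
    using gfw_cont[of x] by (intro continuous_intros) (auto intro: continuous_on_subset)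
  obtain \<omega> where \<omega>: "\<omega> \<in> active_set f x" "\<forall>\<omega>'\<in>active_set f x. gf x \<omega>' \<bullet> h \<le> gf x \<omega> \<bullet> h"
    using continuous_attains_sup[OF active_compact active_ne c] by blast
  have "(SUP \<omega>\<in>active_set f x. gf x \<omega> \<bullet> h) = gf x \<omega> \<bullet> h"
    by (rule cSup_eq_maximum) (use \<omega> in auto)
  thus ?thesis using \<omega> by blast
qed

lemma line_deriv: "((\<lambda>s. f (x + s *\<^sub>R h) \<omega>) has_real_derivative (gf (x + s *\<^sub>R h) \<omega> \<bullet> h)) (at s)"
proof -
  have l: "((\<lambda>s. x + s *\<^sub>R h) has_derivative (\<lambda>s. s *\<^sub>R h)) (at s)"
    by (auto intro!: derivative_eq_intros)
  have "((\<lambda>s. f (x + s *\<^sub>R h) \<omega>) has_derivative (\<lambda>k. gf (x + s *\<^sub>R h) \<omega> \<bullet> (k *\<^sub>R h))) (at s)"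
    using has_derivative_compose[OF l f_diff[where x="x + s *\<^sub>R h" and \<omega>=\<omega>]] by simp
  moreover have "(\<lambda>k. gf (x + s *\<^sub>R h) \<omega> \<bullet> (k *\<^sub>R h)) = (*) (gf (x + s *\<^sub>R h) \<omega> \<bullet> h)"
    by (auto simp: mult.commute)
  ultimately show ?thesis unfolding has_field_derivative_def by simp
qed

lemma danskin: "has_dir_deriv (maxfun f) x h (SUP \<omega>\<in>active_set f x. gf x \<omega> \<bullet> h)"
proof -
  define F where "F = maxfun f"
  define M where "M = (SUP \<omega>\<in>active_set f x. gf x \<omega> \<bullet> h)"
  obtain \<omega>0 where \<omega>0: "\<omega>0 \<in> active_set f x" "M = gf x \<omega>0 \<bullet> h"
    "\<And>\<omega>'. \<omega>' \<in> active_set f x \<Longrightarrow> gf x \<omega>' \<bullet> h \<le> M"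
    using M_att[of x h] unfolding M_def by auto
  have Fx: "F x = f x \<omega>0" using \<omega>0(1) unfolding active_set_def F_def by simp
  define q where "q t = (F (x + t *\<^sub>R h) - F x) / t" for t
  have "\<forall>\<^sub>F t in at_right 0. dist (q t) M < e" if e: "e > 0" for e
  proof -
    define \<epsilon> where "\<epsilon> = e / 3"
    have \<epsilon>: "\<epsilon> > 0" using e unfolding \<epsilon>_def by simp
    have "((\<lambda>s. f (x + s *\<^sub>R h) \<omega>0) has_real_derivative M) (at 0 within {0<..})"
      using line_deriv[where x=x and s=0 and h=h and \<omega>=\<omega>0] \<omega>0(2) by (simp add: has_field_derivative_at_within)
    hence "((\<lambda>t. (f (x + t *\<^sub>R h) \<omega>0 - f x \<omega>0) / t) \<longlongrightarrow> M) (at_right 0)"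
      unfolding has_field_derivative_iff by simp
    hence ev1: "\<forall>\<^sub>F t in at_right 0. dist ((f (x + t *\<^sub>R h) \<omega>0 - f x \<omega>0) / t) M < \<epsilon>"
      using \<epsilon> by (rule tendstoD)
    have low: "\<forall>\<^sub>F t in at_right 0. M - \<epsilon> < q t"
      using ev1 eventually_at_right_less[of 0]
    proof (eventually_elim)
      case (elim t)
      have "f (x + t *\<^sub>R h) \<omega>0 \<le> F (x + t *\<^sub>R h)" unfolding F_def by (rule le_max)
      hence "(f (x + t *\<^sub>R h) \<omega>0 - f x \<omega>0) / t \<le> q t"
        unfolding q_def Fx using elim(2) by (simp add: divide_right_mono)
      thus ?case using elim(1) by (auto simp: dist_real_def)
    qed
    obtain \<eta> where \<eta>: "\<eta> > 0" "\<And>\<omega>. \<not> gf x \<omega> \<bullet> h < M + \<epsilon> \<Longrightarrow> f x \<omega> \<le> F x - \<eta>"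
    proof (cases "{\<omega>. M + \<epsilon> \<le> gf x \<omega> \<bullet> h} = {}")
      case True
      have "f x \<omega> \<le> F x - 1" if "\<not> gf x \<omega> \<bullet> h < M + \<epsilon>" for \<omega>
      proof -
        have "\<omega> \<in> {\<omega>. M + \<epsilon> \<le> gf x \<omega> \<bullet> h}" using that by simp
        thus ?thesis using True by blast
      qed
      thus ?thesis using that[of 1] by auto
    next
      case False
      have cl: "closed {\<omega>. M + \<epsilon> \<le> gf x \<omega> \<bullet> h}"
        using gfw_cont[of x] by (intro closed_Collect_le continuous_intros) auto
      hence cp: "compact {\<omega>. M + \<epsilon> \<le> gf x \<omega> \<bullet> h}" using W compact_Int_closed by fastforce
      obtain \<omega>1 where \<omega>1: "M + \<epsilon> \<le> gf x \<omega>1 \<bullet> h" "\<And>\<omega>. M + \<epsilon> \<le> gf x \<omega> \<bullet> h \<Longrightarrow> f x \<omega> \<le> f x \<omega>1"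
        using continuous_attains_sup[OF cp False continuous_on_subset[OF fw_cont[of x]]] by auto
      have "\<omega>1 \<notin> active_set f x" using \<omega>0(3) \<omega>1(1) \<epsilon> by force
      hence "f x \<omega>1 < F x" using le_max[of x \<omega>1] unfolding active_set_def F_def by auto
      thus ?thesis using that[of "F x - f x \<omega>1"] \<omega>1(2) by force
    qed
    obtain d1 where d1: "d1 > 0" "\<And>y \<omega>. dist y x < d1 \<Longrightarrow> dist (f y \<omega>) (f x \<omega>) < \<eta>/2"
      using tube[OF W f_cont, of "\<eta>/2" x] \<eta>(1) by auto
    define nh where "nh = norm h"
    have nh: "nh \<ge> 0" unfolding nh_def by simp
    obtain d2 where d2: "d2 > 0" "\<And>y \<omega>. dist y x < d2 \<Longrightarrow> dist (gf y \<omega>) (gf x \<omega>) < \<epsilon>/(nh+1)"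
      using tube[OF W gf_cont, of "\<epsilon>/(nh+1)" x] \<epsilon> nh by auto
    have gclose: "gf y \<omega> \<bullet> h < gf x \<omega> \<bullet> h + \<epsilon>" if "dist y x < d2" for y \<omega>
    proof -
      have "gf y \<omega> \<bullet> h - gf x \<omega> \<bullet> h = (gf y \<omega> - gf x \<omega>) \<bullet> h" by (simp add: inner_diff_left)
      also have "\<dots> \<le> norm (gf y \<omega> - gf x \<omega>) * nh" unfolding nh_def by (rule norm_cauchy_schwarz)
      also have "\<dots> \<le> \<epsilon>/(nh+1) * nh" using d2(2)[OF that, of \<omega>] nh
        by (intro mult_right_mono) (auto simp: dist_norm)
      also have "\<dots> < \<epsilon>" using \<epsilon> nh by (simp add: field_simps)
      finally show ?thesis by simp
    qed
    define b where "b = min (d1/(nh+1)) (min (d2/(nh+1)) (\<eta>/(2*(\<bar>M+2*\<epsilon>\<bar>+1))))"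
    have A1: "\<bar>M+2*\<epsilon>\<bar>+1 > 0" by (smt (verit) abs_ge_zero)
    have "\<eta>/(2*(\<bar>M+2*\<epsilon>\<bar>+1)) > 0" using \<eta>(1) A1 by (intro divide_pos_pos mult_pos_pos) auto
    hence b: "b > 0" unfolding b_def using d1(1) d2(1) nh by auto
    have distb: "dist (x + s *\<^sub>R h) x < d" if "0 \<le> s" "s < b" "b \<le> d/(nh+1)" "d > 0" for s d
    proof -
      have "dist (x + s *\<^sub>R h) x = s * nh" using that unfolding nh_def by (simp add: dist_norm)
      also have "\<dots> \<le> s * (nh + 1)" using that by (simp add: distrib_left)
      also have "\<dots> < d/(nh+1) * (nh+1)" using that nh by (intro mult_strict_right_mono) auto
      also have "\<dots> = d" using nh by simp
      finally show ?thesis .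
    qed
    have up: "q t < M + e" if t: "0 < t" "t < b" for t
    proof -
      have tb1: "b \<le> d1/(nh+1)" and tb2: "b \<le> d2/(nh+1)" and tb3: "b \<le> \<eta>/(2*(\<bar>M+2*\<epsilon>\<bar>+1))"
        unfolding b_def by auto
      have tM: "t * \<bar>M+2*\<epsilon>\<bar> \<le> \<eta>/2"
      proof -
        have "t * \<bar>M+2*\<epsilon>\<bar> \<le> t * (\<bar>M+2*\<epsilon>\<bar>+1)" using t by (simp add: distrib_left)
        also have "\<dots> \<le> \<eta>/(2*(\<bar>M+2*\<epsilon>\<bar>+1)) * (\<bar>M+2*\<epsilon>\<bar>+1)"
          using t tb3 by (intro mult_right_mono) auto
        also have "\<dots> = \<eta>/2" using A1 by (simp add: field_simps)
        finally show ?thesis .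
      qed
      have all: "f (x + t *\<^sub>R h) \<omega> \<le> F x + t * (M + 2*\<epsilon>)" for \<omega>
      proof (cases "gf x \<omega> \<bullet> h < M + \<epsilon>")
        case True
        obtain z where z: "0 < z" "z < t"
          "f (x + t *\<^sub>R h) \<omega> - f (x + 0 *\<^sub>R h) \<omega> = (t - 0) * (gf (x + z *\<^sub>R h) \<omega> \<bullet> h)"
          using MVT2[OF t(1), of "\<lambda>s. f (x + s *\<^sub>R h) \<omega>" "\<lambda>s. gf (x + s *\<^sub>R h) \<omega> \<bullet> h"] line_deriv
          by blast
        have "dist (x + z *\<^sub>R h) x < d2" using distb[of z d2] z t tb2 d2(1) by auto
        hence "gf (x + z *\<^sub>R h) \<omega> \<bullet> h < gf x \<omega> \<bullet> h + \<epsilon>" by (rule gclose)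
        hence "gf (x + z *\<^sub>R h) \<omega> \<bullet> h < M + 2*\<epsilon>" using True by simp
        hence "f (x + t *\<^sub>R h) \<omega> - f x \<omega> \<le> t * (M + 2*\<epsilon>)" using z t by simp
        moreover have "f x \<omega> \<le> F x" unfolding F_def by (rule le_max)
        ultimately show ?thesis by simp
      next
        case False
        have "dist (x + t *\<^sub>R h) x < d1" using distb[of t d1] t tb1 d1(1) by auto
        hence "dist (f (x + t *\<^sub>R h) \<omega>) (f x \<omega>) < \<eta>/2" by (rule d1(2))
        hence "f (x + t *\<^sub>R h) \<omega> < f x \<omega> + \<eta>/2" unfolding dist_real_def by arith
        moreover have "f x \<omega> \<le> F x - \<eta>" using \<eta>(2) False by blast
        moreover have "- (t * \<bar>M+2*\<epsilon>\<bar>) \<le> t * (M + 2*\<epsilon>)" using t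
          by (metis abs_ge_minus_self abs_mult abs_of_pos minus_le_iff)
        ultimately show ?thesis using tM by linarith
      qed
      obtain \<omega>' where "F (x + t *\<^sub>R h) = f (x + t *\<^sub>R h) \<omega>'" using max_att unfolding F_def by blast
      hence "F (x + t *\<^sub>R h) - F x \<le> t * (M + 2*\<epsilon>)" using all[of \<omega>'] by simp
      hence "q t \<le> M + 2*\<epsilon>" unfolding q_def using t by (simp add: divide_le_eq mult.commute)
      thus ?thesis using \<epsilon> unfolding \<epsilon>_def by simp
    qed
    have "\<forall>\<^sub>F t in at_right 0. q t < M + e"
      unfolding eventually_at_right_field using b up by auto
    thus ?thesis using low
    proof (eventually_elim)
      case (elim t) thus ?case using \<epsilon>_def e by (simp add: dist_real_def abs_less_iff)
    qed
  qed
  hence "(q \<longlongrightarrow> M) (at_right 0)" by (rule tendstoI)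
  thus ?thesis unfolding has_dir_deriv_def q_def F_def M_def .
qed

end




lemma adj_eq:
  fixes T :: "'a::euclidean_space \<Rightarrow> 'b::real_normed_vector"
  assumes lin: "linear T"
  shows "adj T y \<bullet> h = blinfun_apply y (T h)"
proof -
  define z where "z = (\<Sum>b\<in>Basis. blinfun_apply y (T b) *\<^sub>R b)"
  have lin2: "linear (\<lambda>h. blinfun_apply y (T h))"
    using linear_compose[OF lin bounded_linear.linear[OF blinfun.bounded_linear_right]] by (simp add: comp_def)
  have sc: "blinfun_apply y (T (c *\<^sub>R v)) = c * blinfun_apply y (T v)" for c v
    using linear_scale[OF lin2, of c v] by simp
  have zh: "z \<bullet> h = blinfun_apply y (T h)" for h
  proof -
    have "z \<bullet> h = (\<Sum>b\<in>Basis. blinfun_apply y (T b) * (b \<bullet> h))"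
      unfolding z_def by (simp add: inner_sum_left)
    also have "\<dots> = (\<Sum>b\<in>Basis. blinfun_apply y (T ((h \<bullet> b) *\<^sub>R b)))"
      by (simp add: sc inner_commute mult.commute)
    also have "\<dots> = blinfun_apply y (T (\<Sum>b\<in>Basis. (h \<bullet> b) *\<^sub>R b))"
      using lin2 by (simp add: linear_sum[OF lin2])
    also have "\<dots> = blinfun_apply y (T h)" by (simp add: euclidean_representation)
    finally show ?thesis .
  qed
  have uniq: "z' = z" if "\<forall>h. z' \<bullet> h = blinfun_apply y (T h)" for z'
  proof -
    have "(z' - z) \<bullet> (z' - z) = 0" using that zh by (simp add: inner_diff_left)
    thus ?thesis by simp
  qed
  have "adj T y = z" unfolding adj_def
    by (rule the_equality) (use zh uniq in auto)
  thus ?thesis using zh by simp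
qed

lemma pos_scale_le0:
  fixes c k :: real
  assumes "\<And>t. t > 0 \<Longrightarrow> c + t * k \<le> 0"
  shows "k \<le> 0"
proof (rule ccontr)
  assume "\<not> k \<le> 0"
  hence k: "k > 0" by simp
  have pos: "(\<bar>c\<bar> + 1) / k > 0" using k by (intro divide_pos_pos) (auto intro: add_nonneg_pos)
  have "c + ((\<bar>c\<bar> + 1) / k) * k \<le> 0" using assms[OF pos] .
  moreover have "((\<bar>c\<bar> + 1) / k) * k = \<bar>c\<bar> + 1" using k by simp
  ultimately show False by arith
qed

lemma sep_interior:
  fixes D :: "'a::euclidean_space set"
  assumes cvx: "convex D" and ni: "0 \<notin> interior D"
  shows "\<exists>a. a \<noteq> 0 \<and> (\<forall>y\<in>D. 0 \<le> a \<bullet> y)"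
proof (cases "0 \<in> D")
  case False thus ?thesis using separating_hyperplane_set_0[OF cvx False] by blast
next
  case True
  show ?thesis
  proof (cases "interior D = {}")
    case True
    then obtain a b where ab: "a \<noteq> 0" "D \<subseteq> {x. a \<bullet> x = b}"
      using empty_interior_subset_hyperplane[OF cvx] by metis
    hence "b = 0" using \<open>0 \<in> D\<close> by auto
    hence "\<forall>y\<in>D. 0 \<le> a \<bullet> y" using ab(2) by auto
    thus ?thesis using ab(1) by blast
  next
    case False
    have "affine hull D = UNIV"
    proof -
      obtain z where z: "z \<in> interior D" using False by auto
      then obtain e where e: "e > 0" "ball z e \<subseteq> D" using mem_interior by blast
      have "affine hull (ball z e) \<subseteq> affine hull D" by (rule hull_mono[OF e(2)])
      moreover have "affine hull (ball z e) = UNIV" using e(1) by (simp add: affine_hull_open)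
      ultimately show ?thesis by auto
    qed
    hence ri: "rel_interior D = interior D" by (rule rel_interior_interior)
    have c0: "0 \<in> closure D" using True closure_subset by blast
    have nr: "0 \<notin> rel_interior D" using ni ri by simp
    obtain a where "a \<noteq> 0" "\<And>y. y \<in> closure D \<Longrightarrow> a \<bullet> 0 \<le> a \<bullet> y"
        "\<And>y. y \<in> rel_interior D \<Longrightarrow> a \<bullet> 0 < a \<bullet> y"
      using supporting_hyperplane_relative_frontier[OF cvx c0 nr] by blast
    hence "\<forall>y\<in>D. 0 \<le> a \<bullet> y" using closure_subset[of D] by auto
    thus ?thesis using \<open>a \<noteq> 0\<close> by blast
  qed
qed


lemma vec_eqI:
  fixes a b :: "'a::real_inner"
  assumes "\<And>h. a \<bullet> h = b \<bullet> h"
  shows "a = b"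
proof -
  have "(a - b) \<bullet> (a - b) = 0" using assms[of "a - b"] by (simp add: inner_diff_left)
  thus ?thesis by simp
qed

lemma adj_add:
  fixes T :: "'a::euclidean_space \<Rightarrow> 'b::real_normed_vector"
  assumes "linear T"
  shows "adj T (l1 + l2) = adj T l1 + adj T l2"
  by (rule vec_eqI) (simp add: adj_eq[OF assms] inner_add_left blinfun.add_left)

lemma adj_scale:
  fixes T :: "'a::euclidean_space \<Rightarrow> 'b::real_normed_vector"
  assumes "linear T"
  shows "adj T (c *\<^sub>R l) = c *\<^sub>R adj T l"
  by (rule vec_eqI) (simp add: adj_eq[OF assms] blinfun.scaleR_left)

lemma adj_linear:
  fixes T :: "'a::euclidean_space \<Rightarrow> 'b::real_normed_vector"
  assumes "linear T"
  shows "linear (adj T)"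
  by (rule linearI) (simp_all add: adj_add[OF assms] adj_scale[OF assms])

lemma na_bipolar:
  fixes A :: "'a::euclidean_space set"
  assumes cvx: "convex A" and xA: "x \<in> A" and h: "\<forall>w\<in>normal_cone A x. w \<bullet> h \<le> 0"
  shows "h \<in> contingent_cone A x"
proof (rule ccontr)
  define S where "S = closure (cone hull ((\<lambda>a. a - x) ` A))"
  assume "h \<notin> contingent_cone A x"
  hence hS: "h \<notin> S" unfolding S_def using closure_sub_contingent[OF cvx xA] by blast
  have cS: "convex S" unfolding S_def
    by (intro convex_closure convex_cone_hull convex_translation_subtract cvx)
  have clS: "closed S" unfolding S_def by simp
  have coS: "cone S" unfolding S_def by (intro cone_closure cone_cone_hull)
  obtain a b where ab: "a \<bullet> h < b" "\<And>s. s \<in> S \<Longrightarrow> a \<bullet> s > b"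
    using separating_hyperplane_closed_point[OF cS clS hS] by blast
  have "(\<lambda>a. a - x) ` A \<noteq> {}" using xA by blast
  hence "0 \<in> cone hull ((\<lambda>a. a - x) ` A)" by (simp add: cone_hull_contains_0[symmetric])
  hence "0 \<in> S" unfolding S_def using closure_subset by blast
  hence b: "b < 0" using ab(2)[of 0] by simp
  have pos: "a \<bullet> s \<ge> 0" if "s \<in> S" for s
  proof (rule ccontr)
    assume "\<not> a \<bullet> s \<ge> 0"
    hence neg: "a \<bullet> s < 0" by simp
    define t where "t = b / (a \<bullet> s)"
    have t: "t \<ge> 0" unfolding t_def using b neg by (simp add: divide_nonpos_neg less_imp_le)
    have "t *\<^sub>R s \<in> S" using coS that t unfolding cone_def by blast
    hence "a \<bullet> (t *\<^sub>R s) > b" by (rule ab(2))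
    moreover have "a \<bullet> (t *\<^sub>R s) = b" unfolding t_def using neg by simp
    ultimately show False by simp
  qed
  have "-a \<in> normal_cone A x" unfolding normal_cone_def
  proof (clarify)
    fix v assume "v \<in> contingent_cone A x"
    hence "v \<in> S" unfolding S_def by (rule contingent_sub_closure)
    thus "- a \<bullet> v \<le> 0" using pos by simp
  qed
  hence "- a \<bullet> h \<le> 0" using h by blast
  thus False using ab(1) b by simp
qed

lemma k_bipolar:
  fixes K :: "'b::real_normed_vector set"
  assumes cvx: "convex K" and cn: "cone K" and g: "g \<in> K"
    and hv: "\<forall>l\<in>polar_cone K. blinfun_apply l g = 0 \<longrightarrow> blinfun_apply l v \<le> 0"
  shows "v \<in> contingent_cone K g"
proof (rule ccontr)
  define C where "C = closure (cone hull ((\<lambda>k. k - g) ` K))"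
  assume "v \<notin> contingent_cone K g"
  hence vC: "v \<notin> C" unfolding C_def using closure_sub_contingent[OF cvx g] by blast
  have cC: "convex C" unfolding C_def
    by (intro convex_closure convex_cone_hull convex_translation_subtract cvx)
  have clC: "closed C" unfolding C_def by simp
  have coC: "cone C" unfolding C_def by (intro cone_closure cone_cone_hull)
  have inC: "t *\<^sub>R (k - g) \<in> C" if "t \<ge> 0" "k \<in> K" for t k
  proof -
    have "t *\<^sub>R (k - g) \<in> cone hull ((\<lambda>k. k - g) ` K)" unfolding cc_mem using that by blast
    thus ?thesis unfolding C_def using closure_subset by blast
  qed
  have z: "0 \<in> C" using inC[of 0 g] g by simp
  obtain l :: "'b \<Rightarrow>\<^sub>L real" where l: "\<forall>c\<in>C. blinfun_apply l c \<le> 0" "blinfun_apply l v > 0"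
    using hb_cone_sep[OF cC coC clC z vC] by blast
  have addK: "k + g \<in> K" if "k \<in> K" for k
  proof -
    have "(1/2) *\<^sub>R k + (1/2) *\<^sub>R g \<in> K" using cvx that g unfolding convex_def by auto
    hence "2 *\<^sub>R ((1/2) *\<^sub>R k + (1/2) *\<^sub>R g) \<in> K" using cn unfolding cone_def by auto
    thus ?thesis by (simp add: scaleR_add_right)
  qed
  have "l \<in> polar_cone K" unfolding polar_cone_def
  proof (clarify)
    fix k assume "k \<in> K"
    have "1 *\<^sub>R ((k + g) - g) \<in> C" by (rule inC) (use addK[OF \<open>k \<in> K\<close>] in auto)
    thus "blinfun_apply l k \<le> 0" using l(1) by auto
  qed
  moreover have "blinfun_apply l g = 0"
  proof -
    have "blinfun_apply l g \<le> 0" using \<open>l \<in> polar_cone K\<close> g unfolding polar_cone_def by auto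
    moreover have "0 \<in> K" using cn g unfolding cone_def by (metis scale_zero_left order_refl)
    hence "1 *\<^sub>R (0 - g) \<in> C" by (intro inC) auto
    hence "blinfun_apply l (- g) \<le> 0" using l(1) by auto
    ultimately show ?thesis by (simp add: blinfun.minus_right)
  qed
  ultimately have "blinfun_apply l v \<le> 0" using hv by blast
  thus False using l(2) by simp
qed

lemma k_neg:
  fixes K :: "'b::real_normed_vector set"
  assumes l: "l \<in> polar_cone K" "blinfun_apply l g = 0" and v: "v \<in> contingent_cone K g"
  shows "blinfun_apply l v \<le> 0"
proof -
  obtain \<alpha> hs where pos: "\<And>n. \<alpha> n > 0" and hs: "hs \<longlonglongrightarrow> v" and inK: "\<And>n. g + \<alpha> n *\<^sub>R hs n \<in> K"
    using v unfolding contingent_cone_def by blast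
  have le: "blinfun_apply l (hs n) \<le> 0" for n
  proof -
    have "blinfun_apply l (g + \<alpha> n *\<^sub>R hs n) \<le> 0" using l(1) inK[of n] unfolding polar_cone_def by blast
    hence "\<alpha> n * blinfun_apply l (hs n) \<le> 0" using l(2) by (simp add: blinfun.add_right blinfun.scaleR_right)
    thus ?thesis using pos[of n] by (simp add: mult_le_0_iff)
  qed
  have "(\<lambda>n. blinfun_apply l (hs n)) \<longlonglongrightarrow> blinfun_apply l v"
    by (rule bounded_linear.tendsto[OF blinfun.bounded_linear_right hs])
  thus ?thesis using le by (intro LIMSEQ_le_const2) auto
qed

lemma dd_add:
  assumes "has_dir_deriv \<phi> x h d1" "has_dir_deriv \<psi> x h d2"
  shows "has_dir_deriv (\<lambda>y. \<phi> y + \<psi> y) x h (d1 + d2)"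
proof -
  have "((\<lambda>t. (\<phi> (x + t *\<^sub>R h) - \<phi> x) / t + (\<psi> (x + t *\<^sub>R h) - \<psi> x) / t) \<longlongrightarrow> d1 + d2) (at_right 0)"
    using assms unfolding has_dir_deriv_def by (rule tendsto_add)
  moreover have "(\<lambda>t. (\<phi> (x + t *\<^sub>R h) - \<phi> x) / t + (\<psi> (x + t *\<^sub>R h) - \<psi> x) / t)
      = (\<lambda>t. (\<phi> (x + t *\<^sub>R h) + \<psi> (x + t *\<^sub>R h) - (\<phi> x + \<psi> x)) / t)"
    by (rule ext) (simp add: add_divide_distrib[symmetric] algebra_simps)
  ultimately show ?thesis unfolding has_dir_deriv_def by simp
qed

lemma dd_unique:
  assumes "has_dir_deriv \<phi> x h d1" "has_dir_deriv \<phi> x h d2"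
  shows "d1 = d2"
  using assms unfolding has_dir_deriv_def by (rule tendsto_unique[OF trivial_limit_at_right_real])

lemma dd_lin:
  fixes G :: "'a::real_normed_vector \<Rightarrow> 'b::real_normed_vector"
  assumes G: "(G has_derivative blinfun_apply D) (at x)"
  shows "has_dir_deriv (\<lambda>y. blinfun_apply l (G y)) x h (blinfun_apply l (blinfun_apply D h))"
proof -
  have l: "((\<lambda>s::real. x + s *\<^sub>R h) has_derivative (\<lambda>s. s *\<^sub>R h)) (at 0)"
    by (auto intro!: derivative_eq_intros)
  have G0: "(G has_derivative blinfun_apply D) (at (x + 0 *\<^sub>R h))" using G by simp
  have "((\<lambda>s. G (x + s *\<^sub>R h)) has_derivative (\<lambda>s. blinfun_apply D (s *\<^sub>R h))) (at 0)"
    using has_derivative_compose[OF l G0] by simp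
  hence "((\<lambda>s. blinfun_apply l (G (x + s *\<^sub>R h))) has_derivative (\<lambda>s. blinfun_apply l (blinfun_apply D (s *\<^sub>R h)))) (at 0)"
    by (rule bounded_linear.has_derivative[OF blinfun.bounded_linear_right])
  moreover have "(\<lambda>s. blinfun_apply l (blinfun_apply D (s *\<^sub>R h))) = (*) (blinfun_apply l (blinfun_apply D h))"
    by (rule ext) (simp add: blinfun.scaleR_right mult.commute)
  ultimately have "((\<lambda>s. blinfun_apply l (G (x + s *\<^sub>R h))) has_real_derivative (blinfun_apply l (blinfun_apply D h))) (at 0)"
    unfolding has_field_derivative_def by simp
  hence "((\<lambda>s. blinfun_apply l (G (x + s *\<^sub>R h))) has_real_derivative (blinfun_apply l (blinfun_apply D h))) (at 0 within {0<..})"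
    by (rule has_field_derivative_at_within)
  thus ?thesis unfolding has_field_derivative_iff has_dir_deriv_def by simp
qed

theorem theorem4:
  fixes A :: "'a::euclidean_space set"
    and K :: "'b::banach set"
    and f :: "'a \<Rightarrow> 'w::t2_space \<Rightarrow> real"
    and gf :: "'a \<Rightarrow> 'w \<Rightarrow> 'a"
    and G :: "'a \<Rightarrow> 'b"
    and DG :: "'a \<Rightarrow> ('a \<Rightarrow>\<^sub>L 'b)"
    and x :: 'a
  assumes A: "A \<noteq> {}" "closed A" "convex A"
    and K: "K \<noteq> {}" "closed K" "convex K" "cone K"
    and W: "compact (UNIV :: 'w set)"
    and f_diff: "\<And>x \<omega>. ((\<lambda>y. f y \<omega>) has_derivative (\<lambda>h. gf x \<omega> \<bullet> h)) (at x)"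
    and f_cont: "continuous_on UNIV (\<lambda>p. f (fst p) (snd p))"
    and gf_cont: "continuous_on UNIV (\<lambda>p. gf (fst p) (snd p))"
    and G_diff: "\<And>x. (G has_derivative blinfun_apply (DG x)) (at x)"
    and DG_cont: "continuous_on UNIV DG"
    and feas: "G x \<in> K" "x \<in> A"
  shows "((\<exists>l. is_lagrange_multiplier f G K A x l)
            \<longleftrightarrow> 0 \<in> Dset f gf G (\<lambda>y. blinfun_apply (DG y)) K A x)
       \<and> ((\<forall>h. h \<in> contingent_cone A x - {0}
               \<and> blinfun_apply (DG x) h \<in> contingent_cone K (G x)
               \<longrightarrow> (SUP \<omega>\<in>active_set f x. gf x \<omega> \<bullet> h) > 0)
            \<longleftrightarrow> 0 \<in> interior (Dset f gf G (\<lambda>y. blinfun_apply (DG y)) K A x))"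
proof -
  interpret dsk f gf using W f_diff f_cont gf_cont by (simp add: dsk_def)
  define T where "T = blinfun_apply (DG x)"
  define D where "D = Dset f gf G (\<lambda>y. blinfun_apply (DG y)) K A x"
  define NA where "NA = normal_cone A x"
  define SD where "SD = subdiff f gf x"
  define Mh where "Mh h = (SUP \<omega>\<in>active_set f x. gf x \<omega> \<bullet> h)" for h
  define P where "P = {l. l \<in> polar_cone K \<and> blinfun_apply l (G x) = 0}"
  have linT: "linear T" unfolding T_def by (rule bounded_linear.linear[OF blinfun.bounded_linear_right])
  have adjT: "adj T l \<bullet> h = blinfun_apply l (T h)" for l h by (rule adj_eq[OF linT])
  have Dmem: "d \<in> D \<longleftrightarrow> (\<exists>u l w. d = u + adj T l + w \<and> u \<in> SD \<and> l \<in> P \<and> w \<in> NA)" for d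
    unfolding D_def Dset_def constr_cone_def SD_def NA_def P_def T_def by blast
  have NA_le: "w \<bullet> h \<le> 0" if "w \<in> NA" "h \<in> contingent_cone A x" for w h
    using that unfolding NA_def normal_cone_def by blast
  have NA0: "0 \<in> NA" unfolding NA_def normal_cone_def by simp
  have NA_cone: "t *\<^sub>R w \<in> NA" if "w \<in> NA" "t \<ge> 0" for w t
    using that unfolding NA_def normal_cone_def by (auto simp: mult_nonneg_nonpos)
  have NA_eq: "NA = (\<Inter>v\<in>contingent_cone A x. {z. v \<bullet> z \<le> 0})"
    unfolding NA_def normal_cone_def by (auto simp: inner_commute)
  have NA_closed: "closed NA" unfolding NA_eq by (intro closed_INT ballI closed_halfspace_le)
  have NA_convex: "convex NA" unfolding NA_eq by (intro convex_INT convex_halfspace_le)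
  have NA_bip: "h \<in> contingent_cone A x" if "\<forall>w\<in>NA. w \<bullet> h \<le> 0" for h
    using na_bipolar[OF A(3) feas(2)] that unfolding NA_def by blast
  have P0: "0 \<in> P" unfolding P_def polar_cone_def by simp
  have P_cone: "t *\<^sub>R l \<in> P" if "l \<in> P" "t \<ge> 0" for l t
    using that unfolding P_def polar_cone_def by (auto simp: mult_nonneg_nonpos blinfun.scaleR_left)
  have P_convex: "convex P"
  proof (rule convexI)
    fix l1 l2 :: "'b \<Rightarrow>\<^sub>L real" and u v :: real
    assume h: "l1 \<in> P" "l2 \<in> P" "0 \<le> u" "0 \<le> v" "u + v = 1"
    have "blinfun_apply (u *\<^sub>R l1 + v *\<^sub>R l2) k \<le> 0" if "k \<in> K" for k
    proof -
      have "blinfun_apply l1 k \<le> 0" "blinfun_apply l2 k \<le> 0" using h(1,2) that unfolding P_def polar_cone_def by auto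
      thus ?thesis using h(3,4) by (simp add: blinfun.add_left blinfun.scaleR_left add_nonpos_nonpos mult_nonneg_nonpos)
    qed
    moreover have "blinfun_apply (u *\<^sub>R l1 + v *\<^sub>R l2) (G x) = 0"
      using h(1,2) unfolding P_def by (simp add: blinfun.add_left blinfun.scaleR_left)
    ultimately show "u *\<^sub>R l1 + v *\<^sub>R l2 \<in> P" unfolding P_def polar_cone_def by blast
  qed
  have P_neg: "blinfun_apply l (T h) \<le> 0" if "l \<in> P" "T h \<in> contingent_cone K (G x)" for l h
    using k_neg[of l K "G x" "T h"] that unfolding P_def by blast
  have P_bip: "T h \<in> contingent_cone K (G x)" if "\<forall>l\<in>P. blinfun_apply l (T h) \<le> 0" for h
    using k_bipolar[OF K(3) K(4) feas(1)] that unfolding P_def by blast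
  have SD_mem: "gf x \<omega> \<in> SD" if "\<omega> \<in> active_set f x" for \<omega>
    unfolding SD_def subdiff_def using that by (intro hull_inc) blast
  have Mh_att: "\<exists>\<omega>\<in>active_set f x. Mh h = gf x \<omega> \<bullet> h \<and> (\<forall>\<omega>'\<in>active_set f x. gf x \<omega>' \<bullet> h \<le> Mh h)" for h
    using M_att[of x h] unfolding Mh_def by metis
  have SD_le: "u \<bullet> h \<le> Mh h" if "u \<in> SD" for u h
  proof -
    have "{gf x \<omega> |\<omega>. \<omega> \<in> active_set f x} \<subseteq> {u. h \<bullet> u \<le> Mh h}"
      using Mh_att[of h] by (auto simp: inner_commute)
    hence "SD \<subseteq> {u. h \<bullet> u \<le> Mh h}" unfolding SD_def subdiff_def
      by (rule hull_minimal) (rule convex_halfspace_le)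
    thus ?thesis using that by (auto simp: inner_commute)
  qed
  have SD_compact: "compact SD"
  proof -
    have "{gf x \<omega> |\<omega>. \<omega> \<in> active_set f x} = gf x ` active_set f x" by auto
    moreover have "compact (gf x ` active_set f x)"
      by (rule compact_continuous_image[OF continuous_on_subset[OF gfw_cont] active_compact]) simp
    ultimately show ?thesis unfolding SD_def subdiff_def by (simp add: compact_convex_hull)
  qed
  have SD_convex: "convex SD" unfolding SD_def subdiff_def by simp
  obtain \<omega>a where \<omega>a: "\<omega>a \<in> active_set f x" using active_ne by blast
  have dL: "has_dir_deriv (lagrangian f G l) x h (Mh h + blinfun_apply l (T h))" for l h
  proof -
    have "lagrangian f G l = (\<lambda>y. maxfun f y + blinfun_apply l (G y))"
      by (rule ext) (simp add: lagrangian_def)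
    thus ?thesis unfolding Mh_def T_def using dd_add[OF danskin dd_lin[OF G_diff]] by simp
  qed
  have D_convex: "convex D"
  proof (rule convexI)
    fix d1 d2 and a b :: real assume d: "d1 \<in> D" "d2 \<in> D" and ab0: "0 \<le> a" "0 \<le> b" "a + b = 1"
    have ab: "0 \<le> a \<and> 0 \<le> b \<and> a + b = 1" using ab0 by simp
    obtain u1 l1 w1 where 1: "d1 = u1 + adj T l1 + w1" "u1 \<in> SD" "l1 \<in> P" "w1 \<in> NA" using d(1) Dmem by blast
    obtain u2 l2 w2 where 2: "d2 = u2 + adj T l2 + w2" "u2 \<in> SD" "l2 \<in> P" "w2 \<in> NA" using d(2) Dmem by blast
    have "a *\<^sub>R d1 + b *\<^sub>R d2 = (a *\<^sub>R u1 + b *\<^sub>R u2) + adj T (a *\<^sub>R l1 + b *\<^sub>R l2) + (a *\<^sub>R w1 + b *\<^sub>R w2)"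
      unfolding 1 2 adj_add[OF linT] adj_scale[OF linT] by (simp add: algebra_simps)
    moreover have "a *\<^sub>R u1 + b *\<^sub>R u2 \<in> SD" using SD_convex 1 2 ab unfolding convex_def by blast
    moreover have "a *\<^sub>R l1 + b *\<^sub>R l2 \<in> P" using P_convex 1 2 ab unfolding convex_def by blast
    moreover have "a *\<^sub>R w1 + b *\<^sub>R w2 \<in> NA" using NA_convex 1 2 ab unfolding convex_def by blast
    ultimately show "a *\<^sub>R d1 + b *\<^sub>R d2 \<in> D" using Dmem by blast
  qed
  have part1: "(\<exists>l. is_lagrange_multiplier f G K A x l) \<longleftrightarrow> 0 \<in> D"
  proof
    assume "\<exists>l. is_lagrange_multiplier f G K A x l"
    then obtain l where lm: "is_lagrange_multiplier f G K A x l" by blast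
    have lP: "l \<in> P" using lm unfolding is_lagrange_multiplier_def P_def by blast
    show "0 \<in> D"
    proof (rule ccontr)
      assume n0: "0 \<notin> D"
      define c where "c = adj T l"
      define S1 where "S1 = (\<Union>p\<in>(+) c ` NA. \<Union>u\<in>SD. {p + u})"
      have S1_closed: "closed S1" unfolding S1_def
        by (rule closed_compact_sums[OF closed_translation[OF NA_closed] SD_compact])
      have S1_convex: "convex S1" unfolding S1_def
        by (rule convex_sums[OF convex_translation[OF NA_convex] SD_convex])
      have S1_mem: "s \<in> S1 \<longleftrightarrow> (\<exists>u w. s = u + c + w \<and> u \<in> SD \<and> w \<in> NA)" for s
      proof
        assume "s \<in> S1"
        then obtain w u where "w \<in> NA" "u \<in> SD" "s = (c + w) + u" unfolding S1_def by blast
        thus "\<exists>u w. s = u + c + w \<and> u \<in> SD \<and> w \<in> NA" by (metis add.commute add.left_commute)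
      next
        assume "\<exists>u w. s = u + c + w \<and> u \<in> SD \<and> w \<in> NA"
        then obtain w u where "w \<in> NA" "u \<in> SD" "s = u + c + w" by blast
        hence "s = (c + w) + u" "c + w \<in> (+) c ` NA" by (auto simp: algebra_simps)
        thus "s \<in> S1" unfolding S1_def using \<open>u \<in> SD\<close> by blast
      qed
      have "0 \<notin> S1"
      proof
        assume "0 \<in> S1"
        then obtain u w where "0 = u + c + w" "u \<in> SD" "w \<in> NA" using S1_mem by blast
        hence "0 \<in> D" using Dmem lP unfolding c_def by blast
        thus False using n0 by simp
      qed
      then obtain a b where ab: "a \<bullet> 0 < b" "\<And>s. s \<in> S1 \<Longrightarrow> a \<bullet> s > b"
        using separating_hyperplane_closed_point[OF S1_convex S1_closed] by blast
      define h where "h = - a"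
      have u0: "gf x \<omega>a \<in> SD" by (rule SD_mem[OF \<omega>a])
      have "h \<in> contingent_cone A x"
      proof (rule NA_bip, intro ballI)
        fix w assume w: "w \<in> NA"
        have "- (a \<bullet> (gf x \<omega>a + c)) + t * (h \<bullet> w) \<le> 0" if "t > 0" for t
        proof -
          have "gf x \<omega>a + c + t *\<^sub>R w \<in> S1" using S1_mem u0 NA_cone[OF w, of t] that by force
          hence "a \<bullet> (gf x \<omega>a + c + t *\<^sub>R w) > b" by (rule ab(2))
          thus ?thesis using ab(1) unfolding h_def by (simp add: inner_add_right)
        qed
        hence "h \<bullet> w \<le> 0" by (rule pos_scale_le0)
        thus "w \<bullet> h \<le> 0" by (simp add: inner_commute)
      qed
      then obtain d where d: "has_dir_deriv (lagrangian f G l) x h d" "d \<ge> 0"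
        using lm unfolding is_lagrange_multiplier_def by blast
      have "d = Mh h + blinfun_apply l (T h)" using dd_unique[OF d(1) dL] .
      obtain \<omega>s where \<omega>s: "\<omega>s \<in> active_set f x" "Mh h = gf x \<omega>s \<bullet> h" using Mh_att[of h] by blast
      have "gf x \<omega>s + c + 0 \<in> S1" using S1_mem SD_mem[OF \<omega>s(1)] NA0 by blast
      hence "a \<bullet> (gf x \<omega>s + c) > b" using ab(2) by simp
      hence "gf x \<omega>s \<bullet> h + c \<bullet> h < 0" using ab(1) unfolding h_def by (simp add: inner_add_right inner_commute)
      hence "Mh h + blinfun_apply l (T h) < 0" using \<omega>s(2) adjT unfolding c_def by simp
      thus False using d(2) \<open>d = _\<close> by simp
    qed
  next
    assume "0 \<in> D"
    then obtain u l w where uw: "0 = u + adj T l + w" "u \<in> SD" "l \<in> P" "w \<in> NA" using Dmem by blast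
    have "is_lagrange_multiplier f G K A x l"
      unfolding is_lagrange_multiplier_def
    proof (intro conjI ballI)
      show "l \<in> polar_cone K" "blinfun_apply l (G x) = 0" using uw(3) unfolding P_def by auto
    next
      fix h assume h: "h \<in> contingent_cone A x"
      have "0 = u \<bullet> h + blinfun_apply l (T h) + w \<bullet> h"
        using arg_cong[OF uw(1), of "\<lambda>z. z \<bullet> h"] adjT by (simp add: inner_add_left)
      moreover have "w \<bullet> h \<le> 0" using NA_le[OF uw(4) h] .
      moreover have "u \<bullet> h \<le> Mh h" using SD_le[OF uw(2)] .
      ultimately have "Mh h + blinfun_apply l (T h) \<ge> 0" by linarith
      thus "\<exists>d. has_dir_deriv (lagrangian f G l) x h d \<and> 0 \<le> d" using dL by blast
    qed
    thus "\<exists>l. is_lagrange_multiplier f G K A x l" by blast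
  qed
  have part2: "(\<forall>h. h \<in> contingent_cone A x - {0} \<and> T h \<in> contingent_cone K (G x) \<longrightarrow> Mh h > 0)
      \<longleftrightarrow> 0 \<in> interior D"
  proof
    assume cond: "\<forall>h. h \<in> contingent_cone A x - {0} \<and> T h \<in> contingent_cone K (G x) \<longrightarrow> Mh h > 0"
    show "0 \<in> interior D"
    proof (rule ccontr)
      assume "0 \<notin> interior D"
      then obtain a where a: "a \<noteq> 0" "\<And>y. y \<in> D \<Longrightarrow> 0 \<le> a \<bullet> y"
        using sep_interior[OF D_convex] by blast
      define h where "h = - a"
      have hD: "h \<bullet> y \<le> 0" if "y \<in> D" for y using a(2)[OF that] unfolding h_def by simp
      have u0: "gf x \<omega>a \<in> SD" by (rule SD_mem[OF \<omega>a])
      have hA: "h \<in> contingent_cone A x"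
      proof (rule NA_bip, intro ballI)
        fix w assume w: "w \<in> NA"
        have "h \<bullet> gf x \<omega>a + t * (h \<bullet> w) \<le> 0" if "t > 0" for t
        proof -
          have "gf x \<omega>a + adj T 0 + t *\<^sub>R w \<in> D" using Dmem u0 P0 NA_cone[OF w, of t] that by force
          hence "h \<bullet> (gf x \<omega>a + adj T 0 + t *\<^sub>R w) \<le> 0" by (rule hD)
          moreover have "adj T 0 = 0" using adj_scale[OF linT, of 0 0] by simp
          ultimately show ?thesis by (simp add: inner_add_right)
        qed
        hence "h \<bullet> w \<le> 0" by (rule pos_scale_le0)
        thus "w \<bullet> h \<le> 0" by (simp add: inner_commute)
      qed
      have hK: "T h \<in> contingent_cone K (G x)"
      proof (rule P_bip, intro ballI)
        fix l assume l: "l \<in> P"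
        have "h \<bullet> gf x \<omega>a + t * blinfun_apply l (T h) \<le> 0" if "t > 0" for t
        proof -
          have "gf x \<omega>a + adj T (t *\<^sub>R l) + 0 \<in> D" using Dmem u0 P_cone[OF l, of t] NA0 that by force
          hence "h \<bullet> (gf x \<omega>a + adj T (t *\<^sub>R l) + 0) \<le> 0" by (rule hD)
          moreover have "h \<bullet> adj T (t *\<^sub>R l) = t * blinfun_apply l (T h)"
            using adjT[of "t *\<^sub>R l" h] by (simp add: inner_commute blinfun.scaleR_left)
          ultimately show ?thesis by (simp add: inner_add_right)
        qed
        thus "blinfun_apply l (T h) \<le> 0" by (rule pos_scale_le0)
      qed
      have "h \<noteq> 0" using a(1) unfolding h_def by simp
      hence "Mh h > 0" using cond hA hK by blast
      obtain \<omega>s where \<omega>s: "\<omega>s \<in> active_set f x" "Mh h = gf x \<omega>s \<bullet> h" using Mh_att[of h] by blast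
      have "gf x \<omega>s + adj T 0 + 0 \<in> D" using Dmem SD_mem[OF \<omega>s(1)] P0 NA0 by blast
      moreover have "adj T 0 = 0" using adj_scale[OF linT, of 0 0] by simp
      ultimately have "h \<bullet> gf x \<omega>s \<le> 0" using hD by fastforce
      thus False using \<open>Mh h > 0\<close> \<omega>s(2) by (simp add: inner_commute)
    qed
  next
    assume "0 \<in> interior D"
    then obtain e where e: "e > 0" "ball 0 e \<subseteq> D" using mem_interior by blast
    show "\<forall>h. h \<in> contingent_cone A x - {0} \<and> T h \<in> contingent_cone K (G x) \<longrightarrow> Mh h > 0"
    proof (intro allI impI)
      fix h assume h: "h \<in> contingent_cone A x - {0} \<and> T h \<in> contingent_cone K (G x)"
      hence hA: "h \<in> contingent_cone A x" and h0: "h \<noteq> 0" and hK: "T h \<in> contingent_cone K (G x)" by auto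
      define p where "p = (e / (2 * norm h)) *\<^sub>R h"
      have np: "norm p = e / 2" unfolding p_def using h0 e by simp
      hence "p \<in> ball 0 e" using e by simp
      hence "p \<in> D" using e by blast
      then obtain u l w where uw: "p = u + adj T l + w" "u \<in> SD" "l \<in> P" "w \<in> NA" using Dmem by blast
      have ph: "p \<bullet> h = u \<bullet> h + blinfun_apply l (T h) + w \<bullet> h"
        using uw(1) adjT by (simp add: inner_add_left)
      have "p \<bullet> h = e / (2 * norm h) * (h \<bullet> h)" unfolding p_def by simp
      also have "\<dots> = e / 2 * norm h" using h0 by (simp add: power2_norm_eq_inner[symmetric] power2_eq_square)
      finally have "p \<bullet> h = e / 2 * norm h" .
      moreover have "e / 2 * norm h > 0" using e h0 by simp
      ultimately have "p \<bullet> h > 0" by simp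
      moreover have "blinfun_apply l (T h) \<le> 0" using P_neg[OF uw(3) hK] .
      moreover have "w \<bullet> h \<le> 0" using NA_le[OF uw(4) hA] .
      moreover have "u \<bullet> h \<le> Mh h" using SD_le[OF uw(2)] .
      ultimately show "Mh h > 0" using ph by linarith
    qed
  qed
  show ?thesis using part1 part2 unfolding D_def Mh_def T_def by simp
qed

end
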